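(* $\mathsf{LKur}\subseteq\mathsf{GKur}$.
   Context: $\mathsf{MIPC}$ is the smallest set of formulas in the bimodal language $\mathcal{L}_{\forall\exists}$ containing all theorems of $\mathsf{IPC}$; $\forall(p\wedge q)\leftrightarrow(\forall p\wedge\forall q)$, $\forall p\to p$, $\forall p\to\forall\forall p$; $\exists(p\vee q)\leftrightarrow(\exists p\vee\exists q)$, $p\to\exists p$, $\exists\exists p\to\exists p$, $(\exists p\wedge\exists q)\to\exists(\exists p\wedge q)$; $\exists\forall p\to\forall p$, $\exists p\to\forall\exists p$; closed under modus ponens, substitution and $\varphi/\forall\varphi$. $\mathsf{Kur}=\mathsf{MIPC}+\forall\neg\neg p\to\neg\neg\forall p$. $\mathsf{MS4}$ is the smallest set of formulas in the classical bimodal language $\mathcal{L}_{\Box\forall}$ containing all classical tautologies, the $\mathsf{S4}$ axioms for $\Box$, the $\mathsf{S5}$ axioms for $\forall$, and $\Box\forall p\to\forall\Box p$, closed under modus ponens, substitution, $\Box$- and $\forall$-necessitation; $\Diamond=\neg\Box\neg$. $\mathsf{LKur}=\mathsf{MS4}+\Box\forall\Diamond\Box p\to\Diamond\forall p$. $\mathsf{GKur}=\mathsf{MS4}+\{\varphi^t:\mathsf{Kur}\vdash\varphi\}$, with Gödel translation $\bot^t=\bot$, $p^t=\Box p$, $(\varphi\wedge\psi)^t=\varphi^t\wedge\psi^t$, $(\varphi\vee\psi)^t=\varphi^t\vee\psi^t$, $(\varphi\to\psi)^t=\Box(\neg\varphi^t\vee\psi^t)$, $(\forall\varphi)^t=\Box\forall\varphi^t$,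 $(\exists\varphi)^t=\neg\forall\neg\varphi^t$. *)

theory Defs
  imports Main
begin

datatype ifm = IVar nat | IBot | IAnd ifm ifm | IOr ifm ifm | IImp ifm ifm | IAll ifm | IEx ifm

definition INeg :: "ifm \<Rightarrow> ifm" where "INeg a = IImp a IBot"
definition IIff :: "ifm \<Rightarrow> ifm \<Rightarrow> ifm" where "IIff a b = IAnd (IImp a b) (IImp b a)"

primrec isubst :: "(nat \<Rightarrow> ifm) \<Rightarrow> ifm \<Rightarrow> ifm" where
  "isubst s (IVar n) = s n"
| "isubst s IBot = IBot"
| "isubst s (IAnd a b) = IAnd (isubst s a) (isubst s b)"
| "isubst s (IOr a b) = IOr (isubst s a) (isubst s b)"
| "isubst s (IImp a b) = IImp (isubst s a) (isubst s b)"
| "isubst s (IAll a) = IAll (isubst s a)"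
| "isubst s (IEx a) = IEx (isubst s a)"

text \<open>Axiom schemes of a standard Hilbert calculus for IPC (instantiated with
arbitrary formulas of the bimodal language); together with modus ponens they
generate all (substitution instances of) theorems of IPC.\<close>
inductive ipc_ax :: "ifm \<Rightarrow> bool" where
  "ipc_ax (IImp a (IImp b a))"
| "ipc_ax (IImp (IImp a (IImp b c)) (IImp (IImp a b) (IImp a c)))"
| "ipc_ax (IImp (IAnd a b) a)"
| "ipc_ax (IImp (IAnd a b) b)"
| "ipc_ax (IImp a (IImp b (IAnd a b)))"
| "ipc_ax (IImp a (IOr a b))"
| "ipc_ax (IImp b (IOr a b))"
| "ipc_ax (IImp (IImp a c) (IImp (IImp b c) (IImp (IOr a b) c)))"
| "ipc_ax (IImp IBot a)"

abbreviation "ip \<equiv> IVar 0"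
abbreviation "iq \<equiv> IVar 1"

definition mipc_axioms :: "ifm set" where
  "mipc_axioms =
   { IIff (IAll (IAnd ip iq)) (IAnd (IAll ip) (IAll iq)),
     IImp (IAll ip) ip,
     IImp (IAll ip) (IAll (IAll ip)),
     IIff (IEx (IOr ip iq)) (IOr (IEx ip) (IEx iq)),
     IImp ip (IEx ip),
     IImp (IEx (IEx ip)) (IEx ip),
     IImp (IAnd (IEx ip) (IEx iq)) (IEx (IAnd (IEx ip) iq)),
     IImp (IEx (IAll ip)) (IAll ip),
     IImp (IEx ip) (IAll (IEx ip)) }"

inductive_set MIPC_ext :: "ifm set \<Rightarrow> ifm set" for G :: "ifm set" where
  ipc: "ipc_ax a \<Longrightarrow> a \<in> MIPC_ext G"
| ax: "a \<in> mipc_axioms \<Longrightarrow> a \<in> MIPC_ext G"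
| extra: "a \<in> G \<Longrightarrow> a \<in> MIPC_ext G"
| mp: "a \<in> MIPC_ext G \<Longrightarrow> IImp a b \<in> MIPC_ext G \<Longrightarrow> b \<in> MIPC_ext G"
| sub: "a \<in> MIPC_ext G \<Longrightarrow> isubst s a \<in> MIPC_ext G"
| gen: "a \<in> MIPC_ext G \<Longrightarrow> IAll a \<in> MIPC_ext G"

definition MIPC :: "ifm set" where "MIPC = MIPC_ext {}"

definition Kur :: "ifm set" where
  "Kur = MIPC_ext {IImp (IAll (INeg (INeg ip))) (INeg (INeg (IAll ip)))}"

datatype cfm = CVar nat | CBot | CAnd cfm cfm | COr cfm cfm | CImp cfm cfm | CBox cfm | CAll cfm

definition CNeg :: "cfm \<Rightarrow> cfm" where "CNeg a = CImp a CBot"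
definition CDia :: "cfm \<Rightarrow> cfm" where "CDia a = CNeg (CBox (CNeg a))"
definition CEx :: "cfm \<Rightarrow> cfm" where "CEx a = CNeg (CAll (CNeg a))"

primrec csubst :: "(nat \<Rightarrow> cfm) \<Rightarrow> cfm \<Rightarrow> cfm" where
  "csubst s (CVar n) = s n"
| "csubst s CBot = CBot"
| "csubst s (CAnd a b) = CAnd (csubst s a) (csubst s b)"
| "csubst s (COr a b) = COr (csubst s a) (csubst s b)"
| "csubst s (CImp a b) = CImp (csubst s a) (csubst s b)"
| "csubst s (CBox a) = CBox (csubst s a)"
| "csubst s (CAll a) = CAll (csubst s a)"

primrec peval :: "(cfm \<Rightarrow> bool) \<Rightarrow> cfm \<Rightarrow> bool" where
  "peval v (CVar n) = v (CVar n)"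
| "peval v CBot = False"
| "peval v (CAnd a b) = (peval v a \<and> peval v b)"
| "peval v (COr a b) = (peval v a \<or> peval v b)"
| "peval v (CImp a b) = (peval v a \<longrightarrow> peval v b)"
| "peval v (CBox a) = v (CBox a)"
| "peval v (CAll a) = v (CAll a)"

definition taut :: "cfm \<Rightarrow> bool" where "taut a \<longleftrightarrow> (\<forall>v. peval v a)"

abbreviation "cp \<equiv> CVar 0"
abbreviation "cq \<equiv> CVar 1"

definition ms4_axioms :: "cfm set" where
  "ms4_axioms =
   { CImp (CBox (CImp cp cq)) (CImp (CBox cp) (CBox cq)),
     CImp (CBox cp) cp,
     CImp (CBox cp) (CBox (CBox cp)),
     CImp (CAll (CImp cp cq)) (CImp (CAll cp) (CAll cq)),
     CImp (CAll cp) cp,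
     CImp (CAll cp) (CAll (CAll cp)),
     CImp (CEx cp) (CAll (CEx cp)),
     CImp (CBox (CAll cp)) (CAll (CBox cp)) }"

inductive_set MS4_ext :: "cfm set \<Rightarrow> cfm set" for G :: "cfm set" where
  taut: "taut a \<Longrightarrow> a \<in> MS4_ext G"
| ax: "a \<in> ms4_axioms \<Longrightarrow> a \<in> MS4_ext G"
| extra: "a \<in> G \<Longrightarrow> a \<in> MS4_ext G"
| mp: "a \<in> MS4_ext G \<Longrightarrow> CImp a b \<in> MS4_ext G \<Longrightarrow> b \<in> MS4_ext G"
| sub: "a \<in> MS4_ext G \<Longrightarrow> csubst s a \<in> MS4_ext G"
| nec_box: "a \<in> MS4_ext G \<Longrightarrow> CBox a \<in> MS4_ext G"
| nec_all: "a \<in> MS4_ext G \<Longrightarrow> CAll a \<in> MS4_ext G"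

definition MS4 :: "cfm set" where "MS4 = MS4_ext {}"

definition LKur :: "cfm set" where
  "LKur = MS4_ext {CImp (CBox (CAll (CDia (CBox cp)))) (CDia (CAll cp))}"

primrec gt :: "ifm \<Rightarrow> cfm" where
  "gt IBot = CBot"
| "gt (IVar n) = CBox (CVar n)"
| "gt (IAnd a b) = CAnd (gt a) (gt b)"
| "gt (IOr a b) = COr (gt a) (gt b)"
| "gt (IImp a b) = CBox (COr (CNeg (gt a)) (gt b))"
| "gt (IAll a) = CBox (CAll (gt a))"
| "gt (IEx a) = CNeg (CAll (CNeg (gt a)))"

definition GKur :: "cfm set" where
  "GKur = MS4_ext (gt ` Kur)"

end

theory Submission
  imports Defs
begin

lemma ms4_mono:
  assumes "G \<subseteq> MS4_ext H"
  shows "MS4_ext G \<subseteq> MS4_ext H"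
proof
  fix x assume "x \<in> MS4_ext G"
  then show "x \<in> MS4_ext H"
    by induction (use assms in \<open>auto intro: MS4_ext.intros\<close>)
qed

definition sg :: "cfm \<Rightarrow> cfm \<Rightarrow> nat \<Rightarrow> cfm" where
  "sg a b = (\<lambda>n. if n = 0 then a else b)"

lemma axi: "x \<in> ms4_axioms \<Longrightarrow> csubst (sg a b) x \<in> MS4_ext G"
  by (intro MS4_ext.sub MS4_ext.ax)

lemma mpt: "a \<in> MS4_ext G \<Longrightarrow> taut (CImp a b) \<Longrightarrow> b \<in> MS4_ext G"
  by (metis MS4_ext.mp MS4_ext.taut)

lemma syl: "CImp a b \<in> MS4_ext G \<Longrightarrow> CImp b c \<in> MS4_ext G \<Longrightarrow> CImp a c \<in> MS4_ext G"
proof -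
  assume 1: "CImp a b \<in> MS4_ext G" and 2: "CImp b c \<in> MS4_ext G"
  have "taut (CImp (CImp a b) (CImp (CImp b c) (CImp a c)))" by (simp add: taut_def)
  then have "CImp (CImp b c) (CImp a c) \<in> MS4_ext G" using 1 by (simp add: mpt)
  then show ?thesis using 2 by (metis MS4_ext.mp)
qed

lemma boxT: "CImp (CBox a) a \<in> MS4_ext G"
  using axi[of "CImp (CBox cp) cp" a a G] by (simp add: ms4_axioms_def sg_def)

lemma box4: "CImp (CBox a) (CBox (CBox a)) \<in> MS4_ext G"
  using axi[of "CImp (CBox cp) (CBox (CBox cp))" a a G] by (simp add: ms4_axioms_def sg_def)

lemma allT: "CImp (CAll a) a \<in> MS4_ext G"
  using axi[of "CImp (CAll cp) cp" a a G] by (simp add: ms4_axioms_def sg_def)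

lemma BA: "CImp (CBox (CAll a)) (CAll (CBox a)) \<in> MS4_ext G"
  using axi[of "CImp (CBox (CAll cp)) (CAll (CBox cp))" a a G] by (simp add: ms4_axioms_def sg_def)

lemma boxM: "CImp a b \<in> MS4_ext G \<Longrightarrow> CImp (CBox a) (CBox b) \<in> MS4_ext G"
proof -
  assume "CImp a b \<in> MS4_ext G"
  then have 1: "CBox (CImp a b) \<in> MS4_ext G" by (rule MS4_ext.nec_box)
  have "CImp (CBox (CImp a b)) (CImp (CBox a) (CBox b)) \<in> MS4_ext G"
    using axi[of "CImp (CBox (CImp cp cq)) (CImp (CBox cp) (CBox cq))" a b G]
    by (simp add: ms4_axioms_def sg_def)
  then show ?thesis using 1 by (metis MS4_ext.mp)
qed

lemma allM: "CImp a b \<in> MS4_ext G \<Longrightarrow> CImp (CAll a) (CAll b) \<in> MS4_ext G"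
proof -
  assume "CImp a b \<in> MS4_ext G"
  then have 1: "CAll (CImp a b) \<in> MS4_ext G" by (rule MS4_ext.nec_all)
  have "CImp (CAll (CImp a b)) (CImp (CAll a) (CAll b)) \<in> MS4_ext G"
    using axi[of "CImp (CAll (CImp cp cq)) (CImp (CAll cp) (CAll cq))" a b G]
    by (simp add: ms4_axioms_def sg_def)
  then show ?thesis using 1 by (metis MS4_ext.mp)
qed

lemma key: "CImp (CBox (CAll (CDia (CBox cp)))) (CDia (CAll cp)) \<in> GKur"
proof -
  let ?T = "MS4_ext (gt ` Kur)"
  define d where "d = CDia (CBox cp)"
  define d' where "d' = COr (CNeg (CBox (COr (CNeg (CBox cp)) CBot))) CBot"
  define A where "A = CBox (CAll (CBox d'))"
  define B where "B = CBox (COr (CNeg (CBox (COr (CNeg (CBox (CAll (CBox cp)))) CBot))) CBot)"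
  have kur: "IImp (IAll (INeg (INeg ip))) (INeg (INeg (IAll ip))) \<in> Kur"
    unfolding Kur_def by (rule MIPC_ext.extra) simp
  have "gt (IImp (IAll (INeg (INeg ip))) (INeg (INeg (IAll ip)))) \<in> ?T"
    using kur by (intro MS4_ext.extra imageI)
  then have "CBox (COr (CNeg A) B) \<in> ?T" by (simp add: INeg_def A_def B_def d'_def)
  then have "COr (CNeg A) B \<in> ?T" using boxT by (metis MS4_ext.mp)
  then have AB: "CImp A B \<in> ?T" by (rule mpt) (auto simp add: taut_def CNeg_def)
  have "CImp (COr (CNeg (CBox cp)) CBot) (CNeg (CBox cp)) \<in> ?T"
    by (rule MS4_ext.taut) (simp add: taut_def CNeg_def)
  then have "CImp (CBox (COr (CNeg (CBox cp)) CBot)) (CBox (CNeg (CBox cp))) \<in> ?T" by (rule boxM)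
  then have "CImp d d' \<in> ?T" by (rule mpt) (auto simp add: taut_def CNeg_def d_def d'_def CDia_def)
  then have "CImp (CBox d) (CBox d') \<in> ?T" by (rule boxM)
  then have "CImp (CAll (CBox d)) (CAll (CBox d')) \<in> ?T" by (rule allM)
  then have c1: "CImp (CBox (CAll (CBox d))) A \<in> ?T" unfolding A_def by (rule boxM)
  have "CImp (CBox (CBox (CAll d))) (CBox (CAll (CBox d))) \<in> ?T" using BA by (rule boxM)
  then have "CImp (CBox (CAll d)) (CBox (CAll (CBox d))) \<in> ?T" using box4 syl by blast
  then have c2: "CImp (CBox (CAll d)) B \<in> ?T" using c1 AB syl by blast
  have "CImp (CAll (CBox cp)) (CAll cp) \<in> ?T" using boxT by (rule allM)
  then have "CImp (CBox (CAll (CBox cp))) (CAll cp) \<in> ?T" using boxT syl by blast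
  then have "CImp (CImp (CAll cp) CBot) (COr (CNeg (CBox (CAll (CBox cp)))) CBot) \<in> ?T"
    by (rule mpt) (auto simp add: taut_def CNeg_def)
  then have "CImp (CBox (CImp (CAll cp) CBot)) (CBox (COr (CNeg (CBox (CAll (CBox cp)))) CBot)) \<in> ?T"
    by (rule boxM)
  then have "CImp (COr (CNeg (CBox (COr (CNeg (CBox (CAll (CBox cp)))) CBot))) CBot) (CDia (CAll cp)) \<in> ?T"
    by (rule mpt) (auto simp add: taut_def CNeg_def CDia_def)
  then have "CImp B (CDia (CAll cp)) \<in> ?T" unfolding B_def using boxT syl by blast
  then show ?thesis unfolding GKur_def d_def using c2 syl d_def by blast
qed

theorem lemma4p7:
  shows "LKur \<subseteq> GKur"
  using key unfolding LKur_def GKur_def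
  by (intro ms4_mono) simp

end
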